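(* Let $r\ge 2$ be an integer, let $d_0,\dots,d_{r-1}>0$ with $\sum_{l=0}^{r-1} d_l=1$, let $p>0$ and $C_\alpha>0$ be constants, and let $n_1,n_2,m$ be integers with $n_2>n_1\ge 1$ and $m>n_1$. Suppose that, as $\Delta x\to 0^+$, quantities $\tau=\tau(\Delta x)\ge 0$ and $\beta_k=\beta_k(\Delta x)>0$ ($k=0,\dots,r-1$) satisfy $\tau=O(\Delta x^m)$ and $$\beta_k=\sum_{l'=n_1}^{n_2-1} a_{l'}\,\Delta x^{l'}+b_k\,\Delta x^{n_2}+O(\Delta x^{n_2+1}),\qquad k=0,\dots,r-1,$$ where the coefficients $a_{n_1},\dots,a_{n_2-1}$ are the same for all $k$, $a_{n_1}\neq 0$, and the constants $b_k$ may differ across $k$. Define $\alpha_k=d_k\bigl(1+C_\alpha(\tau/\beta_k)^p\bigr)$ (with the same constant $C_\alpha$ for every $k$) and $\omega_k=\alpha_k/\sum_{l=0}^{r-1}\alpha_l$. Then for every $k$, $$\omega_k=d_k\Bigl(1+O\bigl(\Delta x^{p(m-n_1)}\bigr)\cdot O\bigl(\Delta x^{n_2-n_1}\bigr)\Bigr)=d_k\Bigl(1+O\bigl(\Delta x^{p(m-n_1)+n_2-n_1}\bigr)\Bigr)\quad\text{as }\Delta x\to 0^+.$$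
   Context: In a WENO-Z type scheme, $d_k$ are linear weights, $\beta_k$ are local smoothness indicators, $\tau$ is a global smoothness indicator, $\alpha_k$ are non-normalized nonlinear weights and $\omega_k$ are normalized nonlinear weights. All $O(\cdot)$ statements refer to the limit $\Delta x\to 0^+$ with all other data fixed. *)

theory Defs
  imports "HOL-Analysis.Analysis" "HOL-Library.Landau_Symbols"
begin

definition wz_alpha :: "(nat \<Rightarrow> real) \<Rightarrow> real \<Rightarrow> real \<Rightarrow> (real \<Rightarrow> real)
    \<Rightarrow> (nat \<Rightarrow> real \<Rightarrow> real) \<Rightarrow> nat \<Rightarrow> real \<Rightarrow> real" where
  "wz_alpha d Ca p tau beta k x = d k * (1 + Ca * (tau x / beta k x) powr p)"

definition wz_omega :: "nat \<Rightarrow> (nat \<Rightarrow> real) \<Rightarrow> real \<Rightarrow> real \<Rightarrow> (real \<Rightarrow> real)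
    \<Rightarrow> (nat \<Rightarrow> real \<Rightarrow> real) \<Rightarrow> nat \<Rightarrow> real \<Rightarrow> real" where
  "wz_omega r d Ca p tau beta k x =
     wz_alpha d Ca p tau beta k x / (\<Sum>l<r. wz_alpha d Ca p tau beta l x)"

end

theory Submission
  imports Defs
begin

lemma inv_powr_lip_aux:
  fixes y1 y2 c p :: real
  assumes "c > 0" "c \<le> y1" "y1 \<le> y2" "p > 0"
  shows "\<bar>y1 powr (-p) - y2 powr (-p)\<bar> \<le> p * c powr (-p-1) * \<bar>y1 - y2\<bar>"
proof (cases "y1 = y2")
  case True then show ?thesis by simp
next
  case False
  with assms have lt: "y1 < y2" by simp
  have "\<And>z. y1 \<le> z \<Longrightarrow> z \<le> y2 \<Longrightarrow> ((\<lambda>z. z powr (-p)) has_real_derivative (-p) * z powr (-p - 1)) (at z)"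
    using assms by (intro has_real_derivative_powr) auto
  from MVT2[OF lt this] obtain z where z: "y1 < z" "z < y2"
    "y2 powr (-p) - y1 powr (-p) = (y2 - y1) * ((-p) * z powr (-p - 1))" by blast
  have zc: "z powr (-p-1) \<le> c powr (-p-1)"
    using assms z by (intro powr_mono2') auto
  have e: "y1 powr (-p) - y2 powr (-p) = (y2 - y1) * p * z powr (-p - 1)"
    using z(3) by (simp add: algebra_simps)
  have "\<bar>y1 powr (-p) - y2 powr (-p)\<bar> = (y2 - y1) * p * z powr (-p - 1)"
    unfolding e using lt assms by (intro abs_of_nonneg) auto
  also have "\<dots> \<le> (y2 - y1) * p * c powr (-p - 1)"
    using zc lt assms by (intro mult_left_mono) auto
  finally show ?thesis using lt by (simp add: algebra_simps)
qed

lemma inv_powr_lip: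
  fixes y1 y2 c p :: real
  assumes "c > 0" "c \<le> y1" "c \<le> y2" "p > 0"
  shows "\<bar>y1 powr (-p) - y2 powr (-p)\<bar> \<le> p * c powr (-p-1) * \<bar>y1 - y2\<bar>"
proof (cases "y1 \<le> y2")
  case True then show ?thesis using inv_powr_lip_aux assms by blast
next
  case False
  then have "\<bar>y2 powr (-p) - y1 powr (-p)\<bar> \<le> p * c powr (-p-1) * \<bar>y2 - y1\<bar>"
    using inv_powr_lip_aux assms by simp
  then show ?thesis by (simp add: abs_minus_commute)
qed


lemma pointwise:
  fixes r k :: nat and d :: "nat \<Rightarrow> real" and p Ca c D :: real
    and tau :: "real \<Rightarrow> real" and beta :: "nat \<Rightarrow> real \<Rightarrow> real"
  assumes dpos: "\<And>l. l < r \<Longrightarrow> d l > 0" and dsum: "(\<Sum>l<r. d l) = 1"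
    and p: "p > 0" and Ca: "Ca > 0" and t0: "tau x \<ge> 0"
    and c: "c > 0" and bc: "\<And>l. l < r \<Longrightarrow> c \<le> beta l x"
    and bd: "\<And>l. l < r \<Longrightarrow> \<bar>beta k x - beta l x\<bar> \<le> D" and k: "k < r"
  shows "\<bar>wz_omega r d Ca p tau beta k x / d k - 1\<bar>
           \<le> Ca * (tau x powr p * (p * c powr (-p-1) * D))"
proof -
  define u where "u l = (tau x / beta l x) powr p" for l
  define Q where "Q = tau x powr p * (p * c powr (-p-1) * D)"
  have u_eq: "u l = tau x powr p * beta l x powr (-p)" if "l < r" for l
    using bc[OF that] c t0 by (simp add: u_def powr_divide powr_minus_divide)
  have u0: "u l \<ge> 0" for l by (simp add: u_def)
  have uQ: "\<bar>u k - u l\<bar> \<le> Q" if l: "l < r" for l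
  proof -
    have "\<bar>u k - u l\<bar> = tau x powr p * \<bar>beta k x powr (-p) - beta l x powr (-p)\<bar>"
      using u_eq[OF k] u_eq[OF l] by (simp add: right_diff_distrib[symmetric] abs_mult)
    also have "\<dots> \<le> tau x powr p * (p * c powr (-p-1) * \<bar>beta k x - beta l x\<bar>)"
      by (intro mult_left_mono inv_powr_lip c bc k l p) auto
    also have "\<dots> \<le> Q" unfolding Q_def
      using bd[OF l] p by (intro mult_left_mono) auto
    finally show ?thesis .
  qed
  define S where "S = (\<Sum>l<r. d l * u l)"
  have S0: "S \<ge> 0" unfolding S_def using dpos u0 by (intro sum_nonneg) (simp add: less_imp_le)
  have alpha: "wz_alpha d Ca p tau beta l x = d l + Ca * (d l * u l)" for l
    by (simp add: wz_alpha_def u_def algebra_simps)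
  have den: "(\<Sum>l<r. wz_alpha d Ca p tau beta l x) = 1 + Ca * S"
    by (simp add: alpha sum.distrib sum_distrib_left dsum S_def)
  have dk: "d k > 0" using dpos k by auto
  have Dpos: "1 + Ca * S \<ge> 1" using Ca S0 by simp
  have "wz_omega r d Ca p tau beta k x / d k - 1 = (1 + Ca * u k) / (1 + Ca * S) - 1"
  proof -
    have "wz_alpha d Ca p tau beta k x = d k * (1 + Ca * u k)" by (simp add: alpha algebra_simps)
    then show ?thesis unfolding wz_omega_def den using dk by simp
  qed
  also have "\<dots> = Ca * (u k - S) / (1 + Ca * S)"
    using Dpos by (simp add: field_simps)
  also have "u k - S = (\<Sum>l<r. d l * (u k - u l))"
    by (simp add: S_def right_diff_distrib sum_subtractf sum_distrib_right[symmetric] dsum)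
  finally have eq: "wz_omega r d Ca p tau beta k x / d k - 1 = Ca * (\<Sum>l<r. d l * (u k - u l)) / (1 + Ca * S)" .
  have "\<bar>\<Sum>l<r. d l * (u k - u l)\<bar> \<le> (\<Sum>l<r. d l * Q)"
    by (rule order_trans[OF sum_abs], rule sum_mono)
       (use dpos uQ in \<open>auto simp: abs_mult less_imp_le intro!: mult_left_mono\<close>)
  also have "\<dots> = Q" by (simp add: sum_distrib_right[symmetric] dsum)
  finally have sQ: "\<bar>\<Sum>l<r. d l * (u k - u l)\<bar> \<le> Q" .
  have "\<bar>Ca * (\<Sum>l<r. d l * (u k - u l)) / (1 + Ca * S)\<bar> \<le> \<bar>Ca * (\<Sum>l<r. d l * (u k - u l))\<bar>"
  proof -
    have "\<bar>Ca * (\<Sum>l<r. d l * (u k - u l))\<bar> * 1 \<le> \<bar>Ca * (\<Sum>l<r. d l * (u k - u l))\<bar> * (1 + Ca * S)"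
      by (rule mult_left_mono[OF Dpos]) simp
    moreover have "\<bar>1 + Ca * S\<bar> = 1 + Ca * S" using Dpos by simp
    moreover have "1 + Ca * S > 0" using Dpos by simp
    ultimately show ?thesis by (simp only: abs_divide pos_divide_le_eq mult_1_right)
  qed
  also have "\<dots> \<le> Ca * Q" using Ca sQ by (simp add: abs_mult)
  finally show ?thesis using eq Q_def by simp
qed


lemma powr_alg:
  fixes x Ct A M p :: real and m n1 n2 :: nat
  assumes x: "x > 0" and Ct: "Ct > 0" and A: "A > 0"
  shows "(Ct * x ^ m) powr p * (p * (A / 2 * x ^ n1) powr (-p-1) * (2 * M * x ^ n2))
       = (Ct powr p * p * (A/2) powr (-p-1) * 2 * M) * x powr (p * (real m - real n1) + (real n2 - real n1))"
proof -
  have e1: "x ^ m = x powr real m" "x ^ n1 = x powr real n1" "x ^ n2 = x powr real n2"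
    using x by (simp_all add: powr_realpow)
  have "(Ct * x ^ m) powr p = Ct powr p * x powr (real m * p)"
    using x Ct by (simp add: e1 powr_mult powr_powr)
  moreover have "(A / 2 * x ^ n1) powr (-p-1) = (A/2) powr (-p-1) * x powr (real n1 * (-p-1))"
  proof -
    have "(A / 2 * x ^ n1) powr (-p-1) = (A/2) powr (-p-1) * (x powr real n1) powr (-p-1)"
      unfolding e1 using x A by (intro powr_mult)
    then show ?thesis by (simp add: powr_powr)
  qed
  moreover have "x powr (real m * p) * x powr (real n1 * (-p-1)) * x powr real n2
      = x powr (p * (real m - real n1) + (real n2 - real n1))"
    by (simp add: powr_add[symmetric] algebra_simps)
  ultimately show ?thesis by (simp add: e1(3))
qed


lemma beta_near:
  fixes x be bl Bm Kl Km :: real and a :: "nat \<Rightarrow> real" and n1 n2 :: nat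
  assumes x: "0 < x" "x \<le> 1" and n: "n1 < n2"
    and E: "\<bar>be - (\<Sum>j\<in>{n1..<n2}. a j * x ^ j) - bl * x ^ n2\<bar> \<le> Kl * \<bar>x ^ (n2 + 1)\<bar>"
    and bl: "\<bar>bl\<bar> \<le> Bm" and Kl: "0 \<le> Kl" "Kl \<le> Km"
  shows "\<bar>be - a n1 * x ^ n1\<bar> \<le> ((\<Sum>j\<in>{Suc n1..<n2}. \<bar>a j\<bar>) + Bm + Km) * x ^ (n1 + 1)"
proof -
  define T where "T = (\<Sum>j\<in>{Suc n1..<n2}. a j * x ^ j)"
  define Ee where "Ee = be - (\<Sum>j\<in>{n1..<n2}. a j * x ^ j) - bl * x ^ n2"
  have split: "(\<Sum>j\<in>{n1..<n2}. a j * x ^ j) = a n1 * x ^ n1 + T"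
    unfolding T_def using n by (simp add: sum.atLeast_Suc_lessThan)
  have eq: "be - a n1 * x ^ n1 = T + bl * x ^ n2 + Ee"
    unfolding Ee_def split by simp
  have T: "\<bar>T\<bar> \<le> (\<Sum>j\<in>{Suc n1..<n2}. \<bar>a j\<bar>) * x ^ (n1 + 1)"
    unfolding T_def sum_distrib_right
    by (rule order_trans[OF sum_abs], rule sum_mono)
       (use x in \<open>auto simp: abs_mult simp del: power_Suc intro!: mult_left_mono power_decreasing\<close>)
  have "\<bar>bl * x ^ n2\<bar> \<le> Bm * x ^ (n1 + 1)"
  proof -
    have "x ^ n2 \<le> x ^ (n1 + 1)" using x n by (intro power_decreasing) auto
    then show ?thesis using bl x
      by (simp add: abs_mult) (intro mult_mono, auto)
  qed
  moreover have "\<bar>Ee\<bar> \<le> Km * x ^ (n1 + 1)"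
  proof -
    have "x ^ (n2 + 1) \<le> x ^ (n1 + 1)" using x n by (intro power_decreasing) auto
    then have "Kl * \<bar>x ^ (n2 + 1)\<bar> \<le> Km * x ^ (n1 + 1)" using Kl x
      by (simp) (intro mult_mono, auto)
    then show ?thesis using E unfolding Ee_def by linarith
  qed
  ultimately show ?thesis using T unfolding eq by (simp add: algebra_simps)
qed


theorem lemma3p1:
  fixes r n1 n2 m :: nat
    and d :: "nat \<Rightarrow> real" and p Ca :: real
    and tau :: "real \<Rightarrow> real" and beta :: "nat \<Rightarrow> real \<Rightarrow> real"
    and a b :: "nat \<Rightarrow> real"
  assumes "r \<ge> 2"
    and "\<And>l. l < r \<Longrightarrow> d l > 0"
    and "(\<Sum>l<r. d l) = 1"
    and "p > 0" and "Ca > 0"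
    and "1 \<le> n1" and "n1 < n2" and "n1 < m"
    and "eventually (\<lambda>x. tau x \<ge> 0) (at_right 0)"
    and "\<And>k. k < r \<Longrightarrow> eventually (\<lambda>x. beta k x > 0) (at_right 0)"
    and "tau \<in> O[at_right 0](\<lambda>x. x ^ m)"
    and "\<And>k. k < r \<Longrightarrow>
          (\<lambda>x. beta k x - (\<Sum>l\<in>{n1..<n2}. a l * x ^ l) - b k * x ^ n2)
            \<in> O[at_right 0](\<lambda>x. x ^ (n2 + 1))"
    and "a n1 \<noteq> 0"
    and "k < r"
  shows "(\<lambda>x. wz_omega r d Ca p tau beta k x / d k - 1)
           \<in> O[at_right 0](\<lambda>x. x powr (p * (real m - real n1) + (real n2 - real n1)))"
proof -
  define E where "E l x = beta l x - (\<Sum>j\<in>{n1..<n2}. a j * x ^ j) - b l * x ^ n2" for l x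
  from assms(11) obtain Ct where Ct: "Ct > 0"
    "eventually (\<lambda>x. norm (tau x) \<le> Ct * norm (x ^ m)) (at_right (0::real))"
    by (rule landau_o.bigE)
  have "\<forall>l\<in>{..<r}. \<exists>c. c > 0 \<and> eventually (\<lambda>x. norm (E l x) \<le> c * norm (x ^ (n2 + 1))) (at_right (0::real))"
  proof
    fix l assume "l \<in> {..<r}"
    then have "(\<lambda>x. E l x) \<in> O[at_right 0](\<lambda>x. x ^ (n2 + 1))" using assms(12) unfolding E_def by auto
    then obtain c where "c > 0" "eventually (\<lambda>x. norm (E l x) \<le> c * norm (x ^ (n2 + 1))) (at_right (0::real))"
      by (rule landau_o.bigE)
    then show "\<exists>c. c > 0 \<and> eventually (\<lambda>x. norm (E l x) \<le> c * norm (x ^ (n2 + 1))) (at_right (0::real))" by blast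
  qed
  then obtain K where K: "\<forall>l\<in>{..<r}. K l > 0 \<and> eventually (\<lambda>x. norm (E l x) \<le> K l * norm (x ^ (n2 + 1))) (at_right (0::real))"
    by metis
  have evE: "eventually (\<lambda>x. \<forall>l\<in>{..<r}. norm (E l x) \<le> K l * norm (x ^ (n2 + 1))) (at_right (0::real))"
    using K by (intro eventually_ball_finite) auto
  have evB: "eventually (\<lambda>x. \<forall>l\<in>{..<r}. beta l x > 0) (at_right (0::real))"
    using assms(10) by (intro eventually_ball_finite) auto
  define A where "A = a n1"
  define S where "S = (\<Sum>j\<in>{Suc n1..<n2}. \<bar>a j\<bar>)"
  define Bm where "Bm = (\<Sum>l<r. \<bar>b l\<bar>)"
  define Km where "Km = (\<Sum>l<r. K l)"
  define M where "M = S + Bm + Km + 1"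
  have S0: "S \<ge> 0" unfolding S_def by (intro sum_nonneg) auto
  have Bm0: "Bm \<ge> 0" unfolding Bm_def by (intro sum_nonneg) auto
  have Km0: "Km \<ge> 0" unfolding Km_def using K by (intro sum_nonneg) (auto simp: less_imp_le)
  have M1: "M \<ge> 1" unfolding M_def using S0 Bm0 Km0 by simp
  have Aabs: "\<bar>A\<bar> > 0" using assms(13) unfolding A_def by simp
  define x0 where "x0 = min 1 (\<bar>A\<bar> / (2 * M))"
  have x0: "x0 > 0" unfolding x0_def using Aabs M1 by simp
  have evx: "eventually (\<lambda>x. 0 < x \<and> x < x0) (at_right (0::real))"
    using x0 by (subst eventually_at_right[of 0 1]) auto
  have bl: "\<bar>b l\<bar> \<le> Bm" if "l < r" for l
    unfolding Bm_def using that by (intro member_le_sum) auto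
  have Kl: "0 \<le> K l" "K l \<le> Km" if "l < r" for l
    using K that unfolding Km_def by (auto intro!: member_le_sum simp: less_imp_le)
  have near: "\<bar>beta l x - A * x ^ n1\<bar> \<le> \<bar>A\<bar> / 2 * x ^ n1"
    if x: "0 < x" "x < x0" and EE: "\<forall>l\<in>{..<r}. norm (E l x) \<le> K l * norm (x ^ (n2 + 1))"
      and l: "l < r" for x l
  proof -
    have x1: "x \<le> 1" using x unfolding x0_def by simp
    have "\<bar>beta l x - A * x ^ n1\<bar> \<le> (S + Bm + Km) * x ^ (n1 + 1)"
      unfolding A_def S_def
      by (rule beta_near[OF x(1) x1 assms(7) _ bl[OF l] Kl[OF l]])
         (use EE l in \<open>auto simp: E_def\<close>)
    also have "\<dots> \<le> M * x * x ^ n1"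
      unfolding M_def using x by (simp add: mult.assoc)
    also have "\<dots> \<le> \<bar>A\<bar> / 2 * x ^ n1"
    proof (rule mult_right_mono)
      have "x < \<bar>A\<bar> / (2 * M)" using x unfolding x0_def by simp
      then show "M * x \<le> \<bar>A\<bar> / 2" using M1 by (simp add: field_simps)
    qed (use x in simp)
    finally show ?thesis .
  qed
  have diff: "\<bar>beta k x - beta l x\<bar> \<le> 2 * M * x ^ n2"
    if x: "0 < x" "x < x0" and EE: "\<forall>l\<in>{..<r}. norm (E l x) \<le> K l * norm (x ^ (n2 + 1))"
      and l: "l < r" for x l
  proof -
    have x1: "x \<le> 1" using x unfolding x0_def by simp
    have eq: "beta k x - beta l x = (b k - b l) * x ^ n2 + E k x - E l x"
      unfolding E_def by (simp add: algebra_simps)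
    have xp: "x ^ (n2 + 1) \<le> x ^ n2" using x x1 by (intro power_decreasing) auto
    have "\<bar>(b k - b l) * x ^ n2\<bar> \<le> (2 * Bm) * x ^ n2"
      using bl[OF l] bl[OF assms(14)] x by (simp add: abs_mult)
    moreover have "\<bar>E k x\<bar> \<le> Km * x ^ n2"
    proof -
      have "\<bar>E k x\<bar> \<le> K k * x ^ (n2 + 1)" using EE assms(14) x by auto
      also have "\<dots> \<le> Km * x ^ n2" using Kl[OF assms(14)] xp x by (intro mult_mono) auto
      finally show ?thesis .
    qed
    moreover have "\<bar>E l x\<bar> \<le> Km * x ^ n2"
    proof -
      have "\<bar>E l x\<bar> \<le> K l * x ^ (n2 + 1)" using EE l x by auto
      also have "\<dots> \<le> Km * x ^ n2" using Kl[OF l] xp x by (intro mult_mono) auto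
      finally show ?thesis .
    qed
    moreover have "(2 * Bm) * x ^ n2 + 2 * Km * x ^ n2 \<le> 2 * M * x ^ n2"
      unfolding M_def using x S0 by (simp add: algebra_simps)
    ultimately show ?thesis unfolding eq by linarith
  qed
  have r0: "0 < r" using assms(1) by simp
  have Apos: "A > 0"
  proof (rule ccontr)
    assume "\<not> A > 0"
    then have Aneg: "A < 0" using Aabs by auto
    have "eventually (\<lambda>x. (0 < x \<and> x < x0) \<and> (\<forall>l\<in>{..<r}. norm (E l x) \<le> K l * norm (x ^ (n2 + 1)))
        \<and> (\<forall>l\<in>{..<r}. beta l x > 0)) (at_right (0::real))"
      by (rule eventually_conj[OF evx eventually_conj[OF evE evB]])
    then obtain x where x: "0 < x" "x < x0" "\<forall>l\<in>{..<r}. norm (E l x) \<le> K l * norm (x ^ (n2 + 1))"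
      "\<forall>l\<in>{..<r}. beta l x > 0"
      using eventually_happens'[OF trivial_limit_at_right_real] by blast
    have "\<bar>beta 0 x - A * x ^ n1\<bar> \<le> \<bar>A\<bar> / 2 * x ^ n1" using near[OF x(1,2,3) r0] .
    moreover have "beta 0 x > 0" using x(4) r0 by auto
    moreover have "A * x ^ n1 < 0" using Aneg x by (simp add: mult_neg_pos)
    ultimately show False using Aneg by (simp add: abs_if split: if_splits)
  qed
  define Cst where "Cst = Ca * (Ct powr p * p * (A/2) powr (-p-1) * 2 * M)"
  have "eventually (\<lambda>x. norm (wz_omega r d Ca p tau beta k x / d k - 1)
          \<le> Cst * norm (x powr (p * (real m - real n1) + (real n2 - real n1)))) (at_right (0::real))"
    using evx evE evB Ct(2) assms(9)
  proof (eventually_elim)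
    case (elim x)
    then have x: "0 < x" "x < x0" by auto
    define c where "c = A / 2 * x ^ n1"
    have c: "c > 0" unfolding c_def using Apos x by simp
    have bc: "c \<le> beta l x" if "l < r" for l
      using near[OF x elim(2) that] Apos unfolding c_def by (simp add: abs_if split: if_splits)
    have "\<bar>wz_omega r d Ca p tau beta k x / d k - 1\<bar>
           \<le> Ca * (tau x powr p * (p * c powr (-p-1) * (2 * M * x ^ n2)))"
      by (rule pointwise[where tau=tau and beta=beta and x=x, OF assms(2,3,4,5) elim(5) c bc diff[OF x elim(2)] assms(14)])
    also have "\<dots> \<le> Ca * ((Ct * x ^ m) powr p * (p * c powr (-p-1) * (2 * M * x ^ n2)))"
    proof -
      have "tau x powr p \<le> (Ct * x ^ m) powr p"
        using elim(4,5) x assms(4) by (intro powr_mono2) auto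
      then show ?thesis using assms(4,5) M1 x
        by (intro mult_left_mono mult_right_mono) auto
    qed
    also have "\<dots> = Cst * x powr (p * (real m - real n1) + (real n2 - real n1))"
      unfolding c_def Cst_def using powr_alg[OF x(1) Ct(1) Apos] by simp
    finally show ?case by simp
  qed
  then show ?thesis by (intro bigoI)
qed

end
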